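(* Let $\kappa>2$. Then the solution $t\mapsto e^{i\kappa t/2}\frac{1}{\sqrt2}(1,1)$ of system (H) is spectrally unstable and orbitally unstable.
   Context: Let $\kappa>0$. System (H) is the ODE system for $u=(u_0,u_1):\mathbb R\to\mathbb C^2$: $i u_0'=u_0-u_1-\kappa|u_0|^2u_0$, $\; i u_1'=u_1-u_0-\kappa|u_1|^2u_1$. Linearization about a solution $e^{i\omega t}U_*$ with $U_*\in\mathbb R^2$: writing $u_j=e^{i\omega t}(U_{*j}+v_j)$ and keeping linear terms gives $i v_j'=(1+\omega-\kappa U_{*j}^2)v_j-v_{1-j}-2\kappa U_{*j}^2\,\mathrm{Re}(v_j)$; with $v_j=q_j+ip_j$ this is $X'=\mathbb LX$ for $X=(q_0,p_0,q_1,p_1)\in\mathbb R^4$, $\mathbb L$ a real $4\times4$ matrix. Spectrally unstable means $\mathbb L$ has an eigenvalue with positive real part. The reference solution is orbitally stable if for every $\epsilon>0$ there is $\delta>0$ such that every solution $u$ of (H) with $|u(0)-U_*|\le\delta$ satisfies $\inf_{\theta\in\mathbb R}|u(t)-e^{i\theta}U_*|\le\epsilon$ for all $t\ge0$; orbitally unstable means not orbitally stable. *)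

theory Defs
  imports "HOL-Analysis.Analysis" "Jordan_Normal_Form.Char_Poly"
begin

text \<open>States are pairs in complex x complex, whose norm is the Euclidean norm on C^2.\<close>

definition H_field :: "real \<Rightarrow> complex \<times> complex \<Rightarrow> complex \<times> complex" where
  "H_field \<kappa> u =
     (- \<i> * (fst u - snd u - complex_of_real (\<kappa> * (cmod (fst u))\<^sup>2) * fst u),
      - \<i> * (snd u - fst u - complex_of_real (\<kappa> * (cmod (snd u))\<^sup>2) * snd u))"

definition H_solution :: "real \<Rightarrow> (real \<Rightarrow> complex \<times> complex) \<Rightarrow> bool" where
  "H_solution \<kappa> u \<longleftrightarrow> (\<forall>t. (u has_vector_derivative H_field \<kappa> (u t)) (at t))"

text \<open>Linearization matrix about e^{i omega t} (U0,U1), U real, in coordinates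
  X = (q0,p0,q1,p1), v_j = q_j + i p_j.\<close>

definition lin_matrix :: "real \<Rightarrow> real \<Rightarrow> real \<Rightarrow> real \<Rightarrow> real mat" where
  "lin_matrix \<kappa> \<omega> U0 U1 =
    (let a0 = 1 + \<omega> - \<kappa> * U0\<^sup>2; a1 = 1 + \<omega> - \<kappa> * U1\<^sup>2 in
     mat_of_rows_list 4
      [[0, a0, 0, -1],
       [-(a0 - 2 * \<kappa> * U0\<^sup>2), 0, 1, 0],
       [0, -1, 0, a1],
       [1, 0, -(a1 - 2 * \<kappa> * U1\<^sup>2), 0]])"

definition spectrally_unstable :: "real mat \<Rightarrow> bool" where
  "spectrally_unstable L \<longleftrightarrow>
     (\<exists>z::complex. Re z > 0 \<and> eigenvalue (map_mat complex_of_real L) z)"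

definition orbitally_stable :: "real \<Rightarrow> complex \<times> complex \<Rightarrow> bool" where
  "orbitally_stable \<kappa> U \<longleftrightarrow>
     (\<forall>\<epsilon>>0. \<exists>\<delta>>0. \<forall>u. H_solution \<kappa> u \<and> norm (u 0 - U) \<le> \<delta> \<longrightarrow>
        (\<forall>t\<ge>0. (INF \<theta>::real. norm (u t - (cis \<theta> * fst U, cis \<theta> * snd U))) \<le> \<epsilon>))"

end

theory Submission
  imports Defs
begin

lemma spec:
  fixes \<kappa> :: real
  assumes "\<kappa> > 2"
  shows "spectrally_unstable (lin_matrix \<kappa> (\<kappa> / 2) (1 / sqrt 2) (1 / sqrt 2))"
proof -
  define l where "l = sqrt (2*(\<kappa>-2))"
  have lpos: "l > 0" using assms unfolding l_def by simp
  have ll: "l*l = 2*\<kappa>-4" unfolding l_def using assms by (simp flip: power2_eq_square)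
  have U: "(1 / sqrt 2)^2 = (1/2::real)" by (simp add: power_divide)
  define M where "M = map_mat complex_of_real (lin_matrix \<kappa> (\<kappa> / 2) (1 / sqrt 2) (1 / sqrt 2))"
  define v :: "complex vec" where "v = vec_of_list [1, of_real (l/2), -1, - of_real (l/2)]"
  have dimM: "dim_row M = 4" "dim_col M = 4"
    unfolding M_def lin_matrix_def Let_def mat_of_rows_list_def by auto
  have Mij: "M $$ (i,j) = complex_of_real ([[0, 1, 0, -1], [\<kappa>-1, 0, 1, 0], [0, -1, 0, 1], [1, 0, \<kappa>-1, 0]] ! i ! j)"
    if "i < 4" "j < 4" for i j
    using that unfolding M_def lin_matrix_def Let_def mat_of_rows_list_def U
    by (simp add: algebra_simps)
  have dv: "dim_vec v = 4" unfolding v_def by simp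
  have vv: "vec_index v 0 = 1" "vec_index v 1 = of_real (l/2)" "vec_index v (Suc 0) = of_real (l/2)" "vec_index v 2 = -1" "vec_index v 3 = - of_real (l/2)"
    unfolding v_def by (simp_all add: eval_nat_numeral)
  have "M *\<^sub>v v = complex_of_real l \<cdot>\<^sub>v v"
  proof (rule eq_vecI)
    show "dim_vec (M *\<^sub>v v) = dim_vec (complex_of_real l \<cdot>\<^sub>v v)" using dimM dv by simp
    fix i assume "i < dim_vec (complex_of_real l \<cdot>\<^sub>v v)"
    hence i: "i < 4" using dv by simp
    have "vec_index (M *\<^sub>v v) i = (\<Sum>j<4. M $$ (i,j) * vec_index v j)"
      using i dimM dv by (simp add: scalar_prod_def lessThan_atLeast0)
    also have "\<dots> = vec_index (complex_of_real l \<cdot>\<^sub>v v) i"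
    proof -
      have s4: "(\<Sum>j<4. f j) = f 0 + f 1 + f 2 + f (3::nat)" for f :: "nat \<Rightarrow> complex"
        by (simp add: eval_nat_numeral)
      have "i = 0 \<or> i = 1 \<or> i = 2 \<or> i = 3" using i by auto
      then show ?thesis
        unfolding s4 using dv
        by (auto simp: Mij vv field_simps complex_eq_iff ll)
    qed
    finally show "vec_index (M *\<^sub>v v) i = vec_index (complex_of_real l \<cdot>\<^sub>v v) i" .
  qed
  moreover have "v \<noteq> 0\<^sub>v 4"
  proof
    assume "v = 0\<^sub>v 4"
    hence "vec_index v 0 = 0" by simp
    with vv(1) show False by simp
  qed
  moreover have "v \<in> carrier_vec 4" by (rule carrier_vecI) (rule dv)
  ultimately have "eigenvector M v (complex_of_real l)"
    unfolding eigenvector_def dimM(1) by blast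
  hence ev: "eigenvalue M (complex_of_real l)" unfolding eigenvalue_def by blast
  show ?thesis unfolding spectrally_unstable_def M_def[symmetric]
    using ev lpos by force
qed

lemma derivG:
  fixes W E :: "complex \<Rightarrow> complex" and cc d P Wd Ed :: complex
  assumes W: "(W has_field_derivative Wd) (at z)" and E: "(E has_field_derivative Ed) (at z)"
    and nz: "(W z)^2 + 1 \<noteq> 0"
  shows "((\<lambda>z. P * E z * ((W z + cc) * (W z + d)) / ((W z)^2 + 1))
     has_field_derivative
       P * (Ed * ((W z + cc) * (W z + d)) / ((W z)^2+1)
         + E z * Wd * ((2*W z + cc + d) * ((W z)^2+1) - (W z + cc) * (W z + d) * (2*W z)) / ((W z)^2+1)^2)) (at z)"
  apply (rule derivative_eq_intros W E refl | use nz in assumption)+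
  using nz apply (simp add: divide_simps)
  apply (simp add: algebra_simps power2_eq_square)
  done

lemma keypoly:
  fixes l e c m k :: real
  assumes hk: "2*k = l^2+4" and hc: "c*(l^2+4) = 4*l" and hm: "m*(l^2+4) = l^2-4"
  defines "cc \<equiv> complex_of_real c - \<i> * complex_of_real m"
  shows "\<i> * of_real k * ((of_real e + cc) * (of_real e + - \<i>)) * (of_real e ^2 + 1)
     + 2 * of_real l * of_real e * ((2 * of_real e + cc + - \<i>) * (of_real e ^2 + 1) - (of_real e + cc) * (of_real e + - \<i>) * (2 * of_real e))
   = - \<i> * (2 * ((of_real e + cc) * (of_real e + - \<i>)) * (of_real e ^2 + 1) - 2 * ((of_real e + - cc) * (of_real e + \<i>)) * (of_real e ^2 + 1)
        - of_real k * of_real (e^2 + 2*c*e + 1) * ((of_real e + cc) * (of_real e + - \<i>)))"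
proof -
  define q where "q = l^2 + 4"
  have qn: "q \<noteq> 0" unfolding q_def using zero_le_power2[of l] by linarith
  have ce: "c = 4*l/q" using hc qn unfolding q_def by (simp add: field_simps)
  have me: "m = (l^2-4)/q" using hm qn unfolding q_def by (simp add: field_simps)
  have ke: "k = q/2" using hk unfolding q_def by simp
  have R: "Re (lhs) = Re (rhs) \<and> Im lhs = Im rhs \<Longrightarrow> lhs = rhs" for lhs rhs :: complex
    by (simp add: complex_eq_iff)
  show ?thesis
    unfolding cc_def
    apply (rule R)
    apply (simp add: algebra_simps power2_eq_square)
    unfolding ce me ke
    apply (simp add: field_simps qn)
    unfolding q_def
    apply (simp add: algebra_simps power2_eq_square)
    done
qed
lemma final0:
  fixes l e c m k :: real and P E :: complex
  assumes hk: "2*k = l^2+4" and hc: "c*(l^2+4) = 4*l" and hm: "m*(l^2+4) = l^2-4"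
  defines "cc \<equiv> complex_of_real c - \<i> * complex_of_real m"
  defines "w \<equiv> complex_of_real e"
  shows "P * (\<i> * of_real (k/2) * E * ((w + cc) * (w + - \<i>)) / (w^2+1)
         + E * (of_real l * w) * ((2*w + cc + - \<i>) * (w^2+1) - (w + cc) * (w + - \<i>) * (2*w)) / (w^2+1)^2)
    = - \<i> * (P * E * ((w + cc) * (w + - \<i>)) / (w^2+1) - P * E * ((w + - cc) * (w + \<i>)) / (w^2+1)
        - of_real (k * ((e^2 + 2*c*e + 1) / (2*(e^2+1)))) * (P * E * ((w + cc) * (w + - \<i>)) / (w^2+1)))"
proof -
  have pe: "e^2 + 1 > 0" using zero_le_power2[of e] by linarith
  have nz: "w^2 + 1 \<noteq> 0"
  proof -
    have "w^2 + 1 = complex_of_real (e^2+1)" unfolding w_def by simp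
    thus ?thesis using pe by (simp only: of_real_eq_0_iff)
  qed
  have nz2: "2 + w*(w*2) \<noteq> 0" 
  proof -
    have "2 + w*(w*2) = 2*(w^2+1)" by (simp add: algebra_simps power2_eq_square)
    moreover have "2*(w^2+1) \<noteq> 0" using nz by (simp only: mult_eq_0_iff de_Morgan_disj) simp
    ultimately show ?thesis by metis
  qed
  have nz': "e^2+1 \<noteq> 0" using pe by linarith
  have K: "\<i> * of_real k * ((w + cc) * (w + - \<i>)) * (w ^2 + 1)
     + 2 * of_real l * w * ((2 * w + cc + - \<i>) * (w ^2 + 1) - (w + cc) * (w + - \<i>) * (2 * w))
   = - \<i> * (2 * ((w + cc) * (w + - \<i>)) * (w ^2 + 1) - 2 * ((w + - cc) * (w + \<i>)) * (w ^2 + 1)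
        - of_real k * of_real (e^2 + 2*c*e + 1) * ((w + cc) * (w + - \<i>)))"
    unfolding w_def cc_def using keypoly[OF hk hc hm, of e] by simp
  have ee: "complex_of_real (e^2+1) = w^2 + 1" unfolding w_def by simp
  have lhs: "P * (\<i> * of_real (k/2) * E * ((w + cc) * (w + - \<i>)) / (w^2+1)
         + E * (of_real l * w) * ((2*w + cc + - \<i>) * (w^2+1) - (w + cc) * (w + - \<i>) * (2*w)) / (w^2+1)^2)
     = P * E * (\<i> * of_real k * ((w + cc) * (w + - \<i>)) * (w ^2 + 1)
     + 2 * of_real l * w * ((2 * w + cc + - \<i>) * (w ^2 + 1) - (w + cc) * (w + - \<i>) * (2 * w))) / (2 * (w^2+1)^2)"
    using nz nz2 by (simp add: divide_simps) (simp add: algebra_simps power2_eq_square)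
  have rhs: "- \<i> * (P * E * ((w + cc) * (w + - \<i>)) / (w^2+1) - P * E * ((w + - cc) * (w + \<i>)) / (w^2+1)
        - of_real (k * ((e^2 + 2*c*e + 1) / (2*(e^2+1)))) * (P * E * ((w + cc) * (w + - \<i>)) / (w^2+1)))
     = P * E * (- \<i> * (2 * ((w + cc) * (w + - \<i>)) * (w ^2 + 1) - 2 * ((w + - cc) * (w + \<i>)) * (w ^2 + 1)
        - of_real k * of_real (e^2 + 2*c*e + 1) * ((w + cc) * (w + - \<i>)))) / (2 * (w^2+1)^2)"
    using nz nz2 unfolding of_real_mult of_real_divide ee
    by (simp add: divide_simps) (simp add: algebra_simps power2_eq_square)
  show ?thesis unfolding lhs rhs K ..
qed

lemma keypoly1:
  fixes l e c m k :: real
  assumes hk: "2*k = l^2+4" and hc: "c*(l^2+4) = 4*l" and hm: "m*(l^2+4) = l^2-4"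
  defines "cc \<equiv> complex_of_real c - \<i> * complex_of_real m"
  shows "\<i> * of_real k * ((of_real e + - cc) * (of_real e + \<i>)) * (of_real e ^2 + 1)
     + 2 * of_real l * of_real e * ((2 * of_real e + - cc + \<i>) * (of_real e ^2 + 1) - (of_real e + - cc) * (of_real e + \<i>) * (2 * of_real e))
   = - \<i> * (2 * ((of_real e + - cc) * (of_real e + \<i>)) * (of_real e ^2 + 1) - 2 * ((of_real e + cc) * (of_real e + - \<i>)) * (of_real e ^2 + 1)
        - of_real k * of_real (e^2 - 2*c*e + 1) * ((of_real e + - cc) * (of_real e + \<i>)))"
proof -
  define q where "q = l^2 + 4"
  have qn: "q \<noteq> 0" unfolding q_def using zero_le_power2[of l] by linarith
  have ce: "c = 4*l/q" using hc qn unfolding q_def by (simp add: field_simps)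
  have me: "m = (l^2-4)/q" using hm qn unfolding q_def by (simp add: field_simps)
  have ke: "k = q/2" using hk unfolding q_def by simp
  have R: "Re (lhs) = Re (rhs) \<and> Im lhs = Im rhs \<Longrightarrow> lhs = rhs" for lhs rhs :: complex
    by (simp add: complex_eq_iff)
  show ?thesis
    unfolding cc_def
    apply (rule R)
    apply (simp add: algebra_simps power2_eq_square)
    unfolding ce me ke
    apply (simp add: field_simps qn)
    unfolding q_def
    apply (simp add: algebra_simps power2_eq_square)
    done
qed
lemma final1:
  fixes l e c m k :: real and P E :: complex
  assumes hk: "2*k = l^2+4" and hc: "c*(l^2+4) = 4*l" and hm: "m*(l^2+4) = l^2-4"
  defines "cc \<equiv> complex_of_real c - \<i> * complex_of_real m"
  defines "w \<equiv> complex_of_real e"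
  shows "P * (\<i> * of_real (k/2) * E * ((w + - cc) * (w + \<i>)) / (w^2+1)
         + E * (of_real l * w) * ((2*w + - cc + \<i>) * (w^2+1) - (w + - cc) * (w + \<i>) * (2*w)) / (w^2+1)^2)
    = - \<i> * (P * E * ((w + - cc) * (w + \<i>)) / (w^2+1) - P * E * ((w + cc) * (w + - \<i>)) / (w^2+1)
        - of_real (k * ((e^2 - 2*c*e + 1) / (2*(e^2+1)))) * (P * E * ((w + - cc) * (w + \<i>)) / (w^2+1)))"
proof -
  have pe: "e^2 + 1 > 0" using zero_le_power2[of e] by linarith
  have nz: "w^2 + 1 \<noteq> 0"
  proof -
    have "w^2 + 1 = complex_of_real (e^2+1)" unfolding w_def by simp
    thus ?thesis using pe by (simp only: of_real_eq_0_iff)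
  qed
  have nz2: "2 + w*(w*2) \<noteq> 0" 
  proof -
    have "2 + w*(w*2) = 2*(w^2+1)" by (simp add: algebra_simps power2_eq_square)
    moreover have "2*(w^2+1) \<noteq> 0" using nz by (simp only: mult_eq_0_iff de_Morgan_disj) simp
    ultimately show ?thesis by metis
  qed
  have nz': "e^2+1 \<noteq> 0" using pe by linarith
  have K: "\<i> * of_real k * ((w + - cc) * (w + \<i>)) * (w ^2 + 1)
     + 2 * of_real l * w * ((2 * w + - cc + \<i>) * (w ^2 + 1) - (w + - cc) * (w + \<i>) * (2 * w))
   = - \<i> * (2 * ((w + - cc) * (w + \<i>)) * (w ^2 + 1) - 2 * ((w + cc) * (w + - \<i>)) * (w ^2 + 1)
        - of_real k * of_real (e^2 - 2*c*e + 1) * ((w + - cc) * (w + \<i>)))"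
    unfolding w_def cc_def using keypoly1[OF hk hc hm, of e] by simp
  have ee: "complex_of_real (e^2+1) = w^2 + 1" unfolding w_def by simp
  have lhs: "P * (\<i> * of_real (k/2) * E * ((w + - cc) * (w + \<i>)) / (w^2+1)
         + E * (of_real l * w) * ((2*w + - cc + \<i>) * (w^2+1) - (w + - cc) * (w + \<i>) * (2*w)) / (w^2+1)^2)
     = P * E * (\<i> * of_real k * ((w + - cc) * (w + \<i>)) * (w ^2 + 1)
     + 2 * of_real l * w * ((2 * w + - cc + \<i>) * (w ^2 + 1) - (w + - cc) * (w + \<i>) * (2 * w))) / (2 * (w^2+1)^2)"
    using nz nz2 by (simp add: divide_simps) (simp add: algebra_simps power2_eq_square)
  have rhs: "- \<i> * (P * E * ((w + - cc) * (w + \<i>)) / (w^2+1) - P * E * ((w + cc) * (w + - \<i>)) / (w^2+1)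
        - of_real (k * ((e^2 - 2*c*e + 1) / (2*(e^2+1)))) * (P * E * ((w + - cc) * (w + \<i>)) / (w^2+1)))
     = P * E * (- \<i> * (2 * ((w + - cc) * (w + \<i>)) * (w ^2 + 1) - 2 * ((w + cc) * (w + - \<i>)) * (w ^2 + 1)
        - of_real k * of_real (e^2 - 2*c*e + 1) * ((w + - cc) * (w + \<i>)))) / (2 * (w^2+1)^2)"
    using nz nz2 unfolding of_real_mult of_real_divide ee
    by (simp add: divide_simps) (simp add: algebra_simps power2_eq_square)
  show ?thesis unfolding lhs rhs K ..
qed

definition solP :: "real \<Rightarrow> real \<Rightarrow> complex" where
  "solP c m = complex_of_real (1 / sqrt 2) * (\<i> * complex_of_real c - complex_of_real m)"

definition solW :: "real \<Rightarrow> real \<Rightarrow> complex \<Rightarrow> complex" where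
  "solW l a z = complex_of_real a * exp (complex_of_real l * z)"

definition solE :: "real \<Rightarrow> complex \<Rightarrow> complex" where
  "solE k z = exp (\<i> * complex_of_real (k/2) * z)"

definition solC :: "real \<Rightarrow> real \<Rightarrow> complex" where
  "solC c m = complex_of_real c - \<i> * complex_of_real m"

definition sol :: "real \<Rightarrow> real \<Rightarrow> real \<Rightarrow> real \<Rightarrow> real \<Rightarrow> real \<Rightarrow> complex \<times> complex" where
  "sol k l c m a t =
    (solP c m * solE k (of_real t) * ((solW l a (of_real t) + solC c m) * (solW l a (of_real t) + - \<i>)) / ((solW l a (of_real t))^2 + 1),
     solP c m * solE k (of_real t) * ((solW l a (of_real t) + - solC c m) * (solW l a (of_real t) + \<i>)) / ((solW l a (of_real t))^2 + 1))"

lemma expW: "exp (complex_of_real l * complex_of_real t) = complex_of_real (exp (l*t))"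
  by (metis exp_of_real of_real_mult)

lemma cm1:
  fixes l c m :: real
  assumes hc: "c*(l^2+4) = 4*l" and hm: "m*(l^2+4) = l^2-4"
  shows "c^2 + m^2 = 1"
proof -
  have p: "l^2 + 4 \<noteq> 0" using zero_le_power2[of l] by linarith
  have "(c^2 + m^2) * (l^2+4)^2 = (c*(l^2+4))^2 + (m*(l^2+4))^2" by (simp add: algebra_simps power2_eq_square)
  also have "\<dots> = (l^2+4)^2" unfolding hc hm by (simp add: algebra_simps power2_eq_square)
  finally show ?thesis using p by simp
qed

lemma sol_norms:
  fixes k l c m a t :: real
  assumes hc: "c*(l^2+4) = 4*l" and hm: "m*(l^2+4) = l^2-4"
  defines "e \<equiv> a * exp (l * t)"
  shows "(cmod (fst (sol k l c m a t)))^2 = (e^2 + 2*c*e + 1) / (2*(e^2+1))"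
    and "(cmod (snd (sol k l c m a t)))^2 = (e^2 - 2*c*e + 1) / (2*(e^2+1))"
proof -
  have cm: "c^2 + m^2 = 1" by (rule cm1[OF hc hm])
  have W: "solW l a (of_real t) = of_real e" unfolding solW_def e_def by (simp add: expW)
  have nP: "(cmod (solP c m))^2 = 1/2" unfolding solP_def
    by (simp add: norm_mult cmod_power2 power_mult_distrib power_divide cm add.commute)
  have nE: "cmod (solE k (of_real t)) = 1" unfolding solE_def
    by (metis norm_exp_i_times of_real_mult mult.assoc)
  have nD: "cmod ((of_real e)^2 + 1) = e^2 + 1"
  proof -
    have "(complex_of_real e)^2 + 1 = complex_of_real (e^2+1)" by simp
    moreover have "e^2 + 1 > 0" using zero_le_power2[of e] by linarith
    ultimately show ?thesis by (simp only: norm_of_real)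
  qed
  have n1: "(cmod (of_real e + solC c m))^2 = (e+c)^2 + m^2" unfolding solC_def by (simp add: cmod_power2)
  also have "\<dots> = e^2 + 2*c*e + 1" using cm by (simp add: power2_sum)
  finally have n1: "(cmod (of_real e + solC c m))^2 = e^2 + 2*c*e + 1" .
  have n2: "(cmod (of_real e + - \<i>))^2 = e^2 + 1" by (simp add: cmod_power2)
  have n3: "(cmod (of_real e + - solC c m))^2 = (e-c)^2 + m^2" unfolding solC_def by (simp add: cmod_power2)
  also have "\<dots> = e^2 - 2*c*e + 1" using cm by (simp add: power2_diff)
  finally have n3: "(cmod (of_real e + - solC c m))^2 = e^2 - 2*c*e + 1" .
  have n4: "(cmod (of_real e + \<i>))^2 = e^2 + 1" by (simp add: cmod_power2)
  have pos: "e^2 + 1 \<noteq> 0" using zero_le_power2[of e] by linarith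
  show "(cmod (fst (sol k l c m a t)))^2 = (e^2 + 2*c*e + 1) / (2*(e^2+1))"
    unfolding sol_def fst_conv W
    apply (simp only: norm_mult norm_divide power_mult_distrib power_divide nP nE nD n1 n2)
    using pos by (simp add: divide_simps) (simp add: algebra_simps power2_eq_square)
  show "(cmod (snd (sol k l c m a t)))^2 = (e^2 - 2*c*e + 1) / (2*(e^2+1))"
    unfolding sol_def snd_conv W
    apply (simp only: norm_mult norm_divide power_mult_distrib power_divide nP nE nD n3 n4)
    using pos by (simp add: divide_simps) (simp add: algebra_simps power2_eq_square)
qed

lemma sol_solution:
  fixes k l c m a :: real
  assumes hk: "2*k = l^2+4" and hc: "c*(l^2+4) = 4*l" and hm: "m*(l^2+4) = l^2-4"
  shows "H_solution k (sol k l c m a)"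
  unfolding H_solution_def
proof
  fix t :: real
  define z where "z = complex_of_real t"
  define e where "e = a * exp (l * t)"
  have W: "solW l a z = of_real e" unfolding solW_def e_def z_def by (simp add: expW)
  have Wd: "(solW l a has_field_derivative (of_real l * solW l a z)) (at z)"
    unfolding solW_def by (auto intro!: derivative_eq_intros)
  have Ed: "(solE k has_field_derivative (\<i> * of_real (k/2) * solE k z)) (at z)"
    unfolding solE_def by (auto intro!: derivative_eq_intros)
  have pe: "e^2 + 1 > 0" using zero_le_power2[of e] by linarith
  have nz: "(solW l a z)^2 + 1 \<noteq> 0"
  proof -
    have "(solW l a z)^2 + 1 = complex_of_real (e^2+1)" unfolding W by simp
    thus ?thesis using pe by (simp only: of_real_eq_0_iff)
  qed
  note d0 = derivG[OF Wd Ed nz, of "solP c m" "solC c m" "- \<i>"]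
  note d1 = derivG[OF Wd Ed nz, of "solP c m" "- solC c m" "\<i>"]
  have v: "((\<lambda>x. (fst (sol k l c m a x), snd (sol k l c m a x))) has_vector_derivative
     (solP c m * (\<i> * of_real (k/2) * solE k z * ((solW l a z + solC c m) * (solW l a z + - \<i>)) / ((solW l a z)^2+1)
         + solE k z * (of_real l * solW l a z) * ((2 * solW l a z + solC c m + - \<i>) * ((solW l a z)^2+1) - (solW l a z + solC c m) * (solW l a z + - \<i>) * (2 * solW l a z)) / ((solW l a z)^2+1)^2),
      solP c m * (\<i> * of_real (k/2) * solE k z * ((solW l a z + - solC c m) * (solW l a z + \<i>)) / ((solW l a z)^2+1)
         + solE k z * (of_real l * solW l a z) * ((2 * solW l a z + - solC c m + \<i>) * ((solW l a z)^2+1) - (solW l a z + - solC c m) * (solW l a z + \<i>) * (2 * solW l a z)) / ((solW l a z)^2+1)^2)))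
     (at t)"
    unfolding sol_def fst_conv snd_conv
    apply (rule has_vector_derivative_Pair)
    using has_vector_derivative_real_field[OF d0[unfolded z_def]] has_vector_derivative_real_field[OF d1[unfolded z_def]]
    by (simp_all add: z_def)
  have f0: "fst (sol k l c m a t) = solP c m * solE k z * ((of_real e + solC c m) * (of_real e + - \<i>)) / ((of_real e)^2 + 1)"
    unfolding sol_def z_def[symmetric] W by simp
  have f1: "snd (sol k l c m a t) = solP c m * solE k z * ((of_real e + - solC c m) * (of_real e + \<i>)) / ((of_real e)^2 + 1)"
    unfolding sol_def z_def[symmetric] W by simp
  have eqH: "H_field k (sol k l c m a t) = 
     (solP c m * (\<i> * of_real (k/2) * solE k z * ((solW l a z + solC c m) * (solW l a z + - \<i>)) / ((solW l a z)^2+1)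
         + solE k z * (of_real l * solW l a z) * ((2 * solW l a z + solC c m + - \<i>) * ((solW l a z)^2+1) - (solW l a z + solC c m) * (solW l a z + - \<i>) * (2 * solW l a z)) / ((solW l a z)^2+1)^2),
      solP c m * (\<i> * of_real (k/2) * solE k z * ((solW l a z + - solC c m) * (solW l a z + \<i>)) / ((solW l a z)^2+1)
         + solE k z * (of_real l * solW l a z) * ((2 * solW l a z + - solC c m + \<i>) * ((solW l a z)^2+1) - (solW l a z + - solC c m) * (solW l a z + \<i>) * (2 * solW l a z)) / ((solW l a z)^2+1)^2))"
    unfolding H_field_def W sol_norms[OF hc hm, of k a t, folded e_def]
    unfolding f0 f1
    using final0[OF hk hc hm, of "solP c m" "solE k z" e] final1[OF hk hc hm, of "solP c m" "solE k z" e]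
    unfolding solC_def by (simp add: mult.assoc)
  show "(sol k l c m a has_vector_derivative H_field k (sol k l c m a t)) (at t)"
    using v unfolding eqH by simp
qed


lemma norm_fst_le':
  fixes x :: "complex \<times> complex"
  shows "norm (fst x) \<le> norm x"
  unfolding norm_prod_def
  by (metis real_sqrt_le_mono real_sqrt_abs abs_norm_cancel le_add_same_cancel1 zero_le_power2)

lemma sol_at0:
  fixes k l c m :: real
  assumes cm: "c^2 + m^2 = 1"
  shows "sol k l c m 0 0 = (complex_of_real (1 / sqrt 2), complex_of_real (1 / sqrt 2))"
proof -
  have "solP c m * solC c m * (- \<i>) = complex_of_real (1 / sqrt 2)"
    unfolding solP_def solC_def using cm
    by (simp add: complex_eq_iff algebra_simps power2_eq_square)
  thus ?thesis unfolding sol_def solW_def solE_def by (simp add: algebra_simps)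
qed

lemma orb_unstable:
  fixes \<kappa> :: real
  assumes "\<kappa> > 2"
  shows "\<not> orbitally_stable \<kappa> (complex_of_real (1 / sqrt 2), complex_of_real (1 / sqrt 2))"
proof
  assume st: "orbitally_stable \<kappa> (complex_of_real (1 / sqrt 2), complex_of_real (1 / sqrt 2))"
  define l where "l = sqrt (2*(\<kappa>-2))"
  have lpos: "l > 0" using assms unfolding l_def by simp
  have l2: "l^2 = 2*(\<kappa>-2)" unfolding l_def using assms by simp
  have p: "l^2 + 4 > 0" using zero_le_power2[of l] by linarith
  define c where "c = 4*l/(l^2+4)"
  define m where "m = (l^2-4)/(l^2+4)"
  have hk: "2*\<kappa> = l^2+4" using l2 by simp
  have hc: "c*(l^2+4) = 4*l" unfolding c_def using p by simp
  have hm: "m*(l^2+4) = l^2-4" unfolding m_def using p by simp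
  have cm: "c^2 + m^2 = 1" by (rule cm1[OF hc hm])
  have cpos: "c > 0" unfolding c_def using lpos p by simp
  define U where "U = (complex_of_real (1 / sqrt 2), complex_of_real (1 / sqrt 2))"
  define \<epsilon>0 where "\<epsilon>0 = sqrt ((1+c)/2) - 1 / sqrt 2"
  have s1: "sqrt (1+c) > 1" using cpos by simp
  have e0: "\<epsilon>0 > 0" unfolding \<epsilon>0_def using s1
    by (simp add: real_sqrt_divide divide_strict_right_mono)
  obtain \<delta> where dpos: "\<delta> > 0" and H: "\<And>u. H_solution \<kappa> u \<and> norm (u 0 - U) \<le> \<delta> \<Longrightarrow>
        (\<forall>t\<ge>0. (INF \<theta>::real. norm (u t - (cis \<theta> * fst U, cis \<theta> * snd U))) \<le> \<epsilon>0/2)"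
    using st e0 unfolding orbitally_stable_def U_def[symmetric]
    by (meson half_gt_zero)
  have cont: "continuous (at 0) (\<lambda>a. sol \<kappa> l c m a 0)"
    unfolding sol_def solW_def solE_def by (auto intro!: continuous_intros)
  obtain d where dp: "d > 0" and dd: "\<And>a. dist a 0 < d \<Longrightarrow> dist (sol \<kappa> l c m a 0) (sol \<kappa> l c m 0 0) < \<delta>"
    using cont dpos unfolding continuous_at_eps_delta by blast
  define a where "a = min 1 (d/2)"
  have apos: "a > 0" and a1: "a \<le> 1" and ad: "dist a 0 < d" unfolding a_def using dp by auto
  define u where "u = sol \<kappa> l c m a"
  have solu: "H_solution \<kappa> u" unfolding u_def by (rule sol_solution[OF hk hc hm])
  have "norm (u 0 - U) \<le> \<delta>" using dd[OF ad] unfolding u_def U_def sol_at0[OF cm] dist_norm by simp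
  with H solu have bound: "\<And>t. t \<ge> 0 \<Longrightarrow> (INF \<theta>::real. norm (u t - (cis \<theta> * fst U, cis \<theta> * snd U))) \<le> \<epsilon>0/2"
    by blast
  define t1 where "t1 = - ln a / l"
  have t1: "t1 \<ge> 0" unfolding t1_def using apos a1 lpos by (simp add: divide_nonpos_pos)
  have et1: "a * exp (l * t1) = 1" unfolding t1_def using lpos apos by (simp add: exp_minus)
  have nf: "(cmod (fst (u t1)))^2 = (1 + c)/2"
    unfolding u_def sol_norms(1)[OF hc hm, of \<kappa> a t1] et1 by simp
  hence nf': "cmod (fst (u t1)) = sqrt ((1+c)/2)"
    by (metis norm_ge_zero real_sqrt_unique)
  have low: "\<epsilon>0 \<le> norm (u t1 - (cis \<theta> * fst U, cis \<theta> * snd U))" for \<theta>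
  proof -
    have "\<epsilon>0 = cmod (fst (u t1)) - cmod (cis \<theta> * fst U)"
      unfolding \<epsilon>0_def nf' U_def by (simp add: norm_mult norm_divide real_sqrt_divide)
    also have "\<dots> \<le> cmod (fst (u t1) - cis \<theta> * fst U)" by (rule norm_triangle_ineq2)
    also have "\<dots> = norm (fst (u t1 - (cis \<theta> * fst U, cis \<theta> * snd U)))" by simp
    also have "\<dots> \<le> norm (u t1 - (cis \<theta> * fst U, cis \<theta> * snd U))" by (rule norm_fst_le')
    finally show ?thesis .
  qed
  have "\<epsilon>0 \<le> (INF \<theta>::real. norm (u t1 - (cis \<theta> * fst U, cis \<theta> * snd U)))"
    by (rule cINF_greatest) (auto intro: low)
  with bound[OF t1] e0 show False by simp
qed

theorem mainTheorem2:
  fixes \<kappa> :: real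
  assumes "\<kappa> > 2"
  shows "spectrally_unstable (lin_matrix \<kappa> (\<kappa> / 2) (1 / sqrt 2) (1 / sqrt 2))
     \<and> \<not> orbitally_stable \<kappa> (complex_of_real (1 / sqrt 2), complex_of_real (1 / sqrt 2))"
  using spec[OF assms] orb_unstable[OF assms] by blast

end
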